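(* Let $G$ be a topological group and $H$ a closed subgroup of finite index, with Bohr compactification $(\operatorname{Bohr}(H),\beta)$. Fix a transversal $X$ for the right cosets, $G=\bigsqcup_{x\in X}Hx$, and for $g\in G$, $x\in X$ let $x\cdot g\in X$ and $c(x,g)\in H$ be the unique elements with $xg=c(x,g)(x\cdot g)$. Let $\sigma(g)\in{\rm Sym}(X)$ be $x\mapsto x\cdot g^{-1}$. Define the compact group $\operatorname{Ind}(\operatorname{Bohr}(H),X)=\operatorname{Bohr}(H)^X\rtimes{\rm Sym}(X)$, where ${\rm Sym}(X)$ acts by $\tau((k_x)_{x\in X})=(k_{\tau^{-1}(x)})_{x\in X}$, and define $\widetilde\beta:G\to\operatorname{Ind}(\operatorname{Bohr}(H),X)$ by $\widetilde\beta(g)=\big((\beta(c(x,g)))_{x\in X},\sigma(g)\big)$. Then $\widetilde\beta$ is a continuous homomorphism, and the closure of $\widetilde\beta(G)$ in $\operatorname{Ind}(\operatorname{Bohr}(H),X)$, together with $\widetilde\beta$, is a Bohr compactification of $G$.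
   Context: A Bohr compactification of a topological group $G$ is a pair $(B,\beta)$ with $B$ compact and $\beta:G\to B$ a continuous homomorphism with dense image such that every continuous homomorphism from $G$ to a compact group $L$ factors as $\alpha'\circ\beta$ with $\alpha':B\to L$ continuous. *)

theory Defs
  imports "HOL-Algebra.Algebra" "HOL-Analysis.Analysis"
begin

definition topological_group :: "'a monoid \<Rightarrow> 'a topology \<Rightarrow> bool" where
  "topological_group G T \<longleftrightarrow> group G \<and> topspace T = carrier G \<and>
     continuous_map (prod_topology T T) T (\<lambda>(x, y). x \<otimes>\<^bsub>G\<^esub> y) \<and>
     continuous_map T T (\<lambda>x. inv\<^bsub>G\<^esub> x)"

definition compact_group :: "'a monoid \<Rightarrow> 'a topology \<Rightarrow> bool" where
  "compact_group G T \<longleftrightarrow> topological_group G T \<and> compact_space T \<and> Hausdorff_space T"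

text \<open>Bohr compactification; the universal property is stated for compact groups whose
  carrier lives in the type 'l (given by the first, dummy, argument).\<close>
definition bohr_compactification ::
  "'l itself \<Rightarrow> 'a monoid \<Rightarrow> 'a topology \<Rightarrow> 'b monoid \<Rightarrow> 'b topology \<Rightarrow> ('a \<Rightarrow> 'b) \<Rightarrow> bool" where
  "bohr_compactification (_::'l itself) G TG B TB \<beta> \<longleftrightarrow>
     topological_group G TG \<and> compact_group B TB \<and>
     \<beta> \<in> hom G B \<and> continuous_map TG TB \<beta> \<and>
     TB closure_of (\<beta> ` carrier G) = carrier B \<and>
     (\<forall>(L::'l monoid) TL \<phi>. compact_group L TL \<and> \<phi> \<in> hom G L \<and> continuous_map TG TL \<phi> \<longrightarrow>
        (\<exists>\<alpha>. continuous_map TB TL \<alpha> \<and> (\<forall>g\<in>carrier G. \<phi> g = \<alpha> (\<beta> g))))"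

text \<open>For a transversal Tr of the right cosets H x: x \<cdot> g and c(x,g) with x g = c(x,g) (x \<cdot> g).\<close>
definition tr_act :: "'a monoid \<Rightarrow> 'a set \<Rightarrow> 'a set \<Rightarrow> 'a \<Rightarrow> 'a \<Rightarrow> 'a" where
  "tr_act G H Tr x g = (THE y. y \<in> Tr \<and> (\<exists>h\<in>H. x \<otimes>\<^bsub>G\<^esub> g = h \<otimes>\<^bsub>G\<^esub> y))"

definition tr_cocycle :: "'a monoid \<Rightarrow> 'a set \<Rightarrow> 'a set \<Rightarrow> 'a \<Rightarrow> 'a \<Rightarrow> 'a" where
  "tr_cocycle G H Tr x g = (THE h. h \<in> H \<and> x \<otimes>\<^bsub>G\<^esub> g = h \<otimes>\<^bsub>G\<^esub> tr_act G H Tr x g)"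

definition tr_perm :: "'a monoid \<Rightarrow> 'a set \<Rightarrow> 'a set \<Rightarrow> 'a \<Rightarrow> ('a \<Rightarrow> 'a)" where
  "tr_perm G H Tr g = (\<lambda>x. if x \<in> Tr then tr_act G H Tr x (inv\<^bsub>G\<^esub> g) else x)"

text \<open>Ind(B, Tr) = B^Tr \<rtimes> Sym(Tr), with \<tau>((k_x)_x) = (k_{\<tau>\<inverse>(x)})_x.\<close>
definition Ind :: "'b monoid \<Rightarrow> 'a set \<Rightarrow> (('a \<Rightarrow> 'b) \<times> ('a \<Rightarrow> 'a)) monoid" where
  "Ind B Tr = \<lparr> carrier = (PiE Tr (\<lambda>_. carrier B)) \<times> {\<tau>. \<tau> permutes Tr},
       monoid.mult = (\<lambda>(k, \<tau>) (k', \<tau>'). ((\<lambda>x\<in>Tr. k x \<otimes>\<^bsub>B\<^esub> k' (Hilbert_Choice.inv \<tau> x)), \<tau> \<circ> \<tau>')),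
       monoid.one = ((\<lambda>x\<in>Tr. \<one>\<^bsub>B\<^esub>), id) \<rparr>"

definition Ind_topology :: "'b topology \<Rightarrow> 'a set \<Rightarrow> (('a \<Rightarrow> 'b) \<times> ('a \<Rightarrow> 'a)) topology" where
  "Ind_topology TB Tr = prod_topology (product_topology (\<lambda>_. TB) Tr) (discrete_topology {\<tau>. \<tau> permutes Tr})"

definition induced_map :: "'a monoid \<Rightarrow> 'a set \<Rightarrow> 'a set \<Rightarrow> ('a \<Rightarrow> 'b) \<Rightarrow> 'a \<Rightarrow> ('a \<Rightarrow> 'b) \<times> ('a \<Rightarrow> 'a)" where
  "induced_map G H Tr \<beta> g = ((\<lambda>x\<in>Tr. \<beta> (tr_cocycle G H Tr x g)), tr_perm G H Tr g)"

end

theory Submission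
  imports Defs "HOL-Combinatorics.Permutations"
begin


locale transv = group G for G :: "'a monoid" (structure) +
  fixes H Tr
  assumes sub: "subgroup H G" and Trc: "Tr \<subseteq> carrier G"
    and uniq: "\<forall>g\<in>carrier G. \<exists>!x. x \<in> Tr \<and> g \<in> H #> x"
begin

lemma cancel1: "a \<in> carrier G \<Longrightarrow> b \<in> carrier G \<Longrightarrow> inv a \<otimes> (a \<otimes> b) = b"
  by (simp add: m_assoc[symmetric])
lemma cancel2: "a \<in> carrier G \<Longrightarrow> b \<in> carrier G \<Longrightarrow> a \<otimes> (inv a \<otimes> b) = b"
  by (simp add: m_assoc[symmetric])

lemma cancel3: "a \<in> carrier G \<Longrightarrow> b \<in> carrier G \<Longrightarrow> a \<otimes> inv b \<otimes> b = a"
  by (simp add: m_assoc)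

lemma assoc_cancel: "x \<in> carrier G \<Longrightarrow> g \<in> carrier G \<Longrightarrow> h \<in> carrier G \<Longrightarrow> y \<in> carrier G \<Longrightarrow> z \<in> carrier G \<Longrightarrow>
  x \<otimes> (g \<otimes> h) \<otimes> inv z = (x \<otimes> g \<otimes> inv y) \<otimes> (y \<otimes> h \<otimes> inv z)"
proof -
  assume a: "x \<in> carrier G" "g \<in> carrier G" "h \<in> carrier G" "y \<in> carrier G" "z \<in> carrier G"
  have "(x \<otimes> g \<otimes> inv y) \<otimes> (y \<otimes> h \<otimes> inv z) = ((x \<otimes> g \<otimes> inv y) \<otimes> y) \<otimes> h \<otimes> inv z"
    using a by (simp add: m_assoc[symmetric])
  also have "\<dots> = x \<otimes> g \<otimes> h \<otimes> inv z" using a by (simp add: cancel3)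
  also have "\<dots> = x \<otimes> (g \<otimes> h) \<otimes> inv z" using a by (simp add: m_assoc)
  finally show ?thesis by simp
qed

lemma Hc: "H \<subseteq> carrier G" using sub subgroup.subset by blast

lemma P_iff: assumes a: "a \<in> carrier G" "y \<in> Tr" shows "(\<exists>h\<in>H. a = h \<otimes> y) \<longleftrightarrow> a \<otimes> inv y \<in> H"
proof -
  have y: "y \<in> carrier G" using Trc a by auto
  have 1: "a \<otimes> inv y \<in> H" if h1: "\<exists>h\<in>H. a = h \<otimes> y"
  proof -
    obtain h where "h \<in> H" "a = h \<otimes> y" using h1 by blast
    then show "a \<otimes> inv y \<in> H" using y Hc by (auto simp: m_assoc)
  qed
  have 2: "\<exists>h\<in>H. a = h \<otimes> y" if "a \<otimes> inv y \<in> H"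
  proof -
    have "a = (a \<otimes> inv y) \<otimes> y" using a y by (simp add: m_assoc)
    then show ?thesis using that by blast
  qed
  show ?thesis using 1 2 by blast
qed

lemma ex1: "a \<in> carrier G \<Longrightarrow> \<exists>!y. y \<in> Tr \<and> (\<exists>h\<in>H. a = h \<otimes> y)"
  using uniq unfolding r_coset_def by auto

lemma ta: assumes "x \<in> carrier G" "g \<in> carrier G"
  shows "tr_act G H Tr x g \<in> Tr" "x \<otimes> g \<otimes> inv (tr_act G H Tr x g) \<in> H"
proof -
  have a: "x \<otimes> g \<in> carrier G" using assms by simp
  have "tr_act G H Tr x g \<in> Tr \<and> (\<exists>h\<in>H. x \<otimes> g = h \<otimes> tr_act G H Tr x g)"
    unfolding tr_act_def by (rule theI'[OF ex1[OF a]])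
  then show "tr_act G H Tr x g \<in> Tr" "x \<otimes> g \<otimes> inv (tr_act G H Tr x g) \<in> H"
    using P_iff[OF a] by auto
qed

lemma ta_eq: assumes "x \<in> carrier G" "g \<in> carrier G" "y \<in> Tr" "x \<otimes> g \<otimes> inv y \<in> H"
  shows "tr_act G H Tr x g = y"
proof -
  have a: "x \<otimes> g \<in> carrier G" using assms by simp
  have "y \<in> Tr \<and> (\<exists>h\<in>H. x \<otimes> g = h \<otimes> y)" using P_iff[OF a] assms by auto
  then show ?thesis unfolding tr_act_def by (rule the1_equality[OF ex1[OF a]])
qed

lemma ta_carr: "x \<in> carrier G \<Longrightarrow> g \<in> carrier G \<Longrightarrow> tr_act G H Tr x g \<in> carrier G"
  using ta Trc by blast

lemma tc_eq: assumes "x \<in> carrier G" "g \<in> carrier G"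
  shows "tr_cocycle G H Tr x g = x \<otimes> g \<otimes> inv (tr_act G H Tr x g)"
proof -
  let ?y = "tr_act G H Tr x g"
  have y: "?y \<in> carrier G" using ta_carr assms .
  have 1: "x \<otimes> g \<otimes> inv ?y \<in> H \<and> x \<otimes> g = (x \<otimes> g \<otimes> inv ?y) \<otimes> ?y"
    using ta(2)[OF assms] y assms by (simp add: m_assoc)
  have 2: "h = x \<otimes> g \<otimes> inv ?y" if "h \<in> H \<and> x \<otimes> g = h \<otimes> ?y" for h
  proof -
    have h: "h \<in> carrier G" using that Hc by auto
    have "x \<otimes> g \<otimes> inv ?y = h \<otimes> ?y \<otimes> inv ?y" using that by simp
    also have "\<dots> = h" using h y by (simp add: m_assoc)
    finally show ?thesis by simp
  qed
  show ?thesis unfolding tr_cocycle_def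
    by (rule the_equality) (use 1 2 in auto)
qed

lemma tc_H: "x \<in> carrier G \<Longrightarrow> g \<in> carrier G \<Longrightarrow> tr_cocycle G H Tr x g \<in> H"
  using tc_eq ta by simp

lemma ta_mult: assumes "x \<in> carrier G" "g \<in> carrier G" "h \<in> carrier G"
  shows "tr_act G H Tr x (g \<otimes> h) = tr_act G H Tr (tr_act G H Tr x g) h"
proof -
  let ?y = "tr_act G H Tr x g" let ?z = "tr_act G H Tr ?y h"
  have y: "?y \<in> carrier G" using ta_carr assms by blast
  have z: "?z \<in> carrier G" using ta_carr y assms by blast
  have "x \<otimes> (g \<otimes> h) \<otimes> inv ?z = (x \<otimes> g \<otimes> inv ?y) \<otimes> (?y \<otimes> h \<otimes> inv ?z)"
    by (rule assoc_cancel[OF assms y z])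
  also have "\<dots> \<in> H" by (rule subgroup.m_closed[OF sub ta(2)[OF assms(1,2)] ta(2)[OF y assms(3)]])
  finally show ?thesis by (rule ta_eq[OF assms(1) m_closed[OF assms(2,3)] ta(1)[OF y assms(3)]])
qed

lemma tc_mult: assumes "x \<in> carrier G" "g \<in> carrier G" "h \<in> carrier G"
  shows "tr_cocycle G H Tr x (g \<otimes> h) = tr_cocycle G H Tr x g \<otimes> tr_cocycle G H Tr (tr_act G H Tr x g) h"
proof -
  let ?y = "tr_act G H Tr x g" let ?z = "tr_act G H Tr ?y h"
  have y: "?y \<in> carrier G" using ta_carr assms by blast
  have z: "?z \<in> carrier G" using ta_carr y assms by blast
  show ?thesis using assms y z
    by (simp add: tc_eq ta_mult assoc_cancel[OF assms y z])
qed

lemma ta_one: "x \<in> Tr \<Longrightarrow> tr_act G H Tr x \<one> = x"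
  using Trc by (intro ta_eq) (auto simp: subgroup.one_closed[OF sub])

lemma tp_mult: assumes "g \<in> carrier G" "h \<in> carrier G"
  shows "tr_perm G H Tr (g \<otimes> h) = tr_perm G H Tr g \<circ> tr_perm G H Tr h"
proof
  fix x show "tr_perm G H Tr (g \<otimes> h) x = (tr_perm G H Tr g \<circ> tr_perm G H Tr h) x"
  proof (cases "x \<in> Tr")
    case True
    then have xc: "x \<in> carrier G" using Trc by auto
    have 1: "tr_act G H Tr x (inv h) \<in> Tr" using ta(1)[OF xc] assms by simp
    have "tr_perm G H Tr (g \<otimes> h) x = tr_act G H Tr x (inv h \<otimes> inv g)"
      using True assms by (simp add: tr_perm_def inv_mult_group)
    also have "\<dots> = tr_act G H Tr (tr_act G H Tr x (inv h)) (inv g)"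
      using xc assms by (simp add: ta_mult)
    also have "\<dots> = (tr_perm G H Tr g \<circ> tr_perm G H Tr h) x"
      using True 1 by (simp add: tr_perm_def)
    finally show ?thesis .
  next
    case False
    then show ?thesis by (simp add: tr_perm_def)
  qed
qed

lemma tp_one: "tr_perm G H Tr \<one> = id"
  by (auto simp: tr_perm_def ta_one)

lemma tp_inv_comp: assumes "g \<in> carrier G"
  shows "tr_perm G H Tr (inv g) \<circ> tr_perm G H Tr g = id" "tr_perm G H Tr g \<circ> tr_perm G H Tr (inv g) = id"
  using tp_mult[of "inv g" g] tp_mult[of g "inv g"] assms by (simp_all add: tp_one)

lemma tp_inv: assumes "g \<in> carrier G"
  shows "Hilbert_Choice.inv (tr_perm G H Tr g) = tr_perm G H Tr (inv g)"
  using inv_unique_comp tp_inv_comp[OF assms] by blast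

lemma tp_Tr: "g \<in> carrier G \<Longrightarrow> x \<in> Tr \<Longrightarrow> tr_perm G H Tr g x \<in> Tr"
  using Trc ta(1) by (auto simp: tr_perm_def)

lemma tp_permutes: assumes "g \<in> carrier G" shows "tr_perm G H Tr g permutes Tr"
proof (rule bij_imp_permutes)
  show "bij_betw (tr_perm G H Tr g) Tr Tr"
  proof (rule bij_betw_byWitness[where f'="tr_perm G H Tr (inv g)"])
    have i: "inv g \<in> carrier G" using assms by simp
    show "\<forall>a\<in>Tr. tr_perm G H Tr (inv g) (tr_perm G H Tr g a) = a"
      using fun_cong[OF tp_inv_comp(1)[OF assms]] by simp
    show "\<forall>a'\<in>Tr. tr_perm G H Tr g (tr_perm G H Tr (inv g) a') = a'"
      using fun_cong[OF tp_inv_comp(2)[OF assms]] by simp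
    show "tr_perm G H Tr g ` Tr \<subseteq> Tr" using tp_Tr[OF assms] by blast
    show "tr_perm G H Tr (inv g) ` Tr \<subseteq> Tr" using tp_Tr[OF i] by blast
  qed
qed (auto simp: tr_perm_def)

end



abbreviation "hinv \<equiv> Hilbert_Choice.inv"

locale indl = group B for B :: "'b monoid" (structure) + fixes Tr :: "'a set"
begin

lemma Ind_carrier: "carrier (Ind B Tr) = (PiE Tr (\<lambda>_. carrier B)) \<times> {\<tau>. \<tau> permutes Tr}"
  by (simp add: Ind_def)
lemma Ind_mult: "(k, \<tau>) \<otimes>\<^bsub>Ind B Tr\<^esub> (k', \<tau>') = ((\<lambda>x\<in>Tr. k x \<otimes> k' (hinv \<tau> x)), \<tau> \<circ> \<tau>')"
  by (simp add: Ind_def)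
lemma Ind_one: "\<one>\<^bsub>Ind B Tr\<^esub> = ((\<lambda>x\<in>Tr. \<one>), id)"
  by (simp add: Ind_def)

lemma hinv_in: "\<tau> permutes Tr \<Longrightarrow> x \<in> Tr \<Longrightarrow> hinv \<tau> x \<in> Tr"
  by (simp add: permutes_in_image permutes_inv)

lemma kc: "k \<in> PiE Tr (\<lambda>_. carrier B) \<Longrightarrow> x \<in> Tr \<Longrightarrow> k x \<in> carrier B"
  by (auto simp: PiE_def)

lemma Ind_group: "group (Ind B Tr)"
proof (rule groupI)
  fix a b assume "a \<in> carrier (Ind B Tr)" "b \<in> carrier (Ind B Tr)"
  then show "a \<otimes>\<^bsub>Ind B Tr\<^esub> b \<in> carrier (Ind B Tr)"
    by (cases a; cases b) (auto simp: Ind_carrier Ind_mult hinv_in permutes_compose kc)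
next
  show "\<one>\<^bsub>Ind B Tr\<^esub> \<in> carrier (Ind B Tr)" by (auto simp: Ind_carrier Ind_one)
next
  fix a b c assume "a \<in> carrier (Ind B Tr)" "b \<in> carrier (Ind B Tr)" "c \<in> carrier (Ind B Tr)"
  then obtain k \<tau> k' \<tau>' k'' \<tau>'' where a: "a = (k, \<tau>)" "b = (k', \<tau>')" "c = (k'', \<tau>'')"
    and p: "\<tau> permutes Tr" "\<tau>' permutes Tr" "\<tau>'' permutes Tr"
    and k: "k \<in> PiE Tr (\<lambda>_. carrier B)" "k' \<in> PiE Tr (\<lambda>_. carrier B)" "k'' \<in> PiE Tr (\<lambda>_. carrier B)"
    by (auto simp: Ind_carrier)
  have inv_o: "hinv (\<tau> \<circ> \<tau>') = hinv \<tau>' \<circ> hinv \<tau>" using p by (simp add: o_inv_distrib permutes_bij)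
  show "a \<otimes>\<^bsub>Ind B Tr\<^esub> b \<otimes>\<^bsub>Ind B Tr\<^esub> c = a \<otimes>\<^bsub>Ind B Tr\<^esub> (b \<otimes>\<^bsub>Ind B Tr\<^esub> c)"
    using p k unfolding a
    by (auto simp: Ind_mult inv_o hinv_in m_assoc o_assoc kc intro!: ext)
next
  fix a assume "a \<in> carrier (Ind B Tr)"
  then obtain k \<tau> where a: "a = (k, \<tau>)" and p: "\<tau> permutes Tr" and k: "k \<in> PiE Tr (\<lambda>_. carrier B)"
    by (auto simp: Ind_carrier)
  show "\<one>\<^bsub>Ind B Tr\<^esub> \<otimes>\<^bsub>Ind B Tr\<^esub> a = a"
    using k unfolding a by (auto simp: Ind_mult Ind_one kc intro!: ext) (auto simp: PiE_def extensional_def)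
next
  fix a assume "a \<in> carrier (Ind B Tr)"
  then obtain k \<tau> where a: "a = (k, \<tau>)" and p: "\<tau> permutes Tr" and k: "k \<in> PiE Tr (\<lambda>_. carrier B)"
    by (auto simp: Ind_carrier)
  let ?y = "((\<lambda>x\<in>Tr. inv (k (\<tau> x))), hinv \<tau>)"
  have "?y \<in> carrier (Ind B Tr)" using p k by (auto simp: Ind_carrier permutes_in_image permutes_inv)
  moreover have "?y \<otimes>\<^bsub>Ind B Tr\<^esub> a = \<one>\<^bsub>Ind B Tr\<^esub>"
    using p k unfolding a
    by (auto simp: Ind_mult Ind_one permutes_inv_inv hinv_in permutes_inv_o permutes_inverses
         permutes_in_image kc intro!: ext)
  ultimately show "\<exists>y\<in>carrier (Ind B Tr). y \<otimes>\<^bsub>Ind B Tr\<^esub> a = \<one>\<^bsub>Ind B Tr\<^esub>" by blast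
qed

lemma Ind_inv: assumes "\<tau> permutes Tr" "k \<in> PiE Tr (\<lambda>_. carrier B)"
  shows "inv\<^bsub>Ind B Tr\<^esub> (k, \<tau>) = ((\<lambda>x\<in>Tr. inv (k (\<tau> x))), hinv \<tau>)"
proof (rule group.inv_equality[OF Ind_group])
  show "((\<lambda>x\<in>Tr. inv (k (\<tau> x))), hinv \<tau>) \<otimes>\<^bsub>Ind B Tr\<^esub> (k, \<tau>) = \<one>\<^bsub>Ind B Tr\<^esub>"
    using assms by (auto simp: Ind_mult Ind_one permutes_inv_inv hinv_in permutes_inv_o permutes_inverses
         permutes_in_image kc intro!: ext)
qed (use assms in \<open>auto simp: Ind_carrier permutes_in_image permutes_inv\<close>)

end



lemma tg_group: "topological_group G T \<Longrightarrow> group G" by (simp add: topological_group_def)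
lemma tg_top: "topological_group G T \<Longrightarrow> topspace T = carrier G" by (simp add: topological_group_def)

lemma tg_mult: fixes G :: "'a monoid" assumes "topological_group G T" "continuous_map Z T f" "continuous_map Z T g"
  shows "continuous_map Z T (\<lambda>x. f x \<otimes>\<^bsub>G\<^esub> g x)"
proof -
  have "continuous_map Z T ((\<lambda>(x, y). x \<otimes>\<^bsub>G\<^esub> y) \<circ> (\<lambda>x. (f x, g x)))"
    using assms by (intro continuous_map_compose continuous_map_pairedI) (auto simp: topological_group_def continuous_map_paired)
  then show ?thesis by (simp add: o_def)
qed

lemma tg_inv: fixes G :: "'a monoid" assumes "topological_group G T" "continuous_map Z T f"
  shows "continuous_map Z T (\<lambda>x. inv\<^bsub>G\<^esub> (f x))"
proof -
  have "continuous_map Z T ((\<lambda>x. inv\<^bsub>G\<^esub> x) \<circ> f)"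
    using assms by (intro continuous_map_compose) (auto simp: topological_group_def)
  then show ?thesis by (simp add: o_def)
qed

lemma tg_sub: assumes tg: "topological_group G T" and S: "subgroup S G"
  shows "topological_group (G\<lparr>carrier := S\<rparr>) (subtopology T S)"
proof -
  have grp: "group G" using tg by (simp add: topological_group_def)
  have Sc: "S \<subseteq> carrier G" using S subgroup.subset by blast
  have top: "topspace (subtopology T S) = S" using Sc tg by (auto simp: topological_group_def)
  have m: "continuous_map (prod_topology T T) T (\<lambda>(x, y). x \<otimes>\<^bsub>G\<^esub> y)"
    and i: "continuous_map T T (\<lambda>x. inv\<^bsub>G\<^esub> x)" using tg by (auto simp: topological_group_def)
  have "continuous_map (prod_topology (subtopology T S) (subtopology T S)) (subtopology T S) (\<lambda>(x, y). x \<otimes>\<^bsub>G\<^esub> y)"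
    unfolding subtopology_Times[symmetric]
    by (rule continuous_map_into_subtopology[OF continuous_map_from_subtopology[OF m]])
       (use tg S in \<open>auto simp: topological_group_def subgroup.m_closed\<close>)
  moreover have "continuous_map (subtopology T S) (subtopology T S) (\<lambda>x. inv\<^bsub>G\<lparr>carrier := S\<rparr>\<^esub> x)"
  proof (rule continuous_map_eq)
    show "continuous_map (subtopology T S) (subtopology T S) (\<lambda>x. inv\<^bsub>G\<^esub> x)"
      by (rule continuous_map_into_subtopology[OF continuous_map_from_subtopology[OF i]])
         (use tg S in \<open>auto simp: topological_group_def subgroup.m_inv_closed\<close>)
  qed (use top grp S in \<open>auto simp: group.m_inv_consistent\<close>)
  ultimately show ?thesis
    using top grp S by (simp add: topological_group_def subgroup.subgroup_is_group)
qed

lemma tg_closure_sub: assumes tg: "topological_group G T" and S: "subgroup S G"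
  shows "subgroup (T closure_of S) G"
proof -
  have grp: "group G" using tg by (simp add: topological_group_def)
  have Sc: "S \<subseteq> topspace T" using S subgroup.subset tg by (auto simp: topological_group_def)
  have m: "continuous_map (prod_topology T T) T (\<lambda>(x, y). x \<otimes>\<^bsub>G\<^esub> y)"
    and i: "continuous_map T T (\<lambda>x. inv\<^bsub>G\<^esub> x)" using tg by (auto simp: topological_group_def)
  show ?thesis
  proof (rule group.subgroupI[OF grp])
    show "T closure_of S \<subseteq> carrier G" using closure_of_subset_topspace tg by (metis topological_group_def)
    show "T closure_of S \<noteq> {}" using closure_of_subset[OF Sc] subgroup.one_closed[OF S] by blast
  next
    fix a assume a: "a \<in> T closure_of S"
    have "(\<lambda>x. inv\<^bsub>G\<^esub> x) ` (T closure_of S) \<subseteq> T closure_of ((\<lambda>x. inv\<^bsub>G\<^esub> x) ` S)"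
      by (rule continuous_map_image_closure_subset[OF i])
    also have "\<dots> \<subseteq> T closure_of S"
      by (rule closure_of_mono) (use subgroup.m_inv_closed[OF S] in auto)
    finally have sub: "(\<lambda>x. inv\<^bsub>G\<^esub> x) ` (T closure_of S) \<subseteq> T closure_of S" .
    show "inv\<^bsub>G\<^esub> a \<in> T closure_of S" by (rule subsetD[OF sub imageI[OF a]])
  next
    fix a b assume a: "a \<in> T closure_of S" "b \<in> T closure_of S"
    have "(\<lambda>(x, y). x \<otimes>\<^bsub>G\<^esub> y) ` (prod_topology T T closure_of (S \<times> S)) \<subseteq> T closure_of ((\<lambda>(x, y). x \<otimes>\<^bsub>G\<^esub> y) ` (S \<times> S))"
      by (rule continuous_map_image_closure_subset[OF m])
    also have "\<dots> \<subseteq> T closure_of S"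
      by (rule closure_of_mono) (use subgroup.m_closed[OF S] in auto)
    finally have sub: "(\<lambda>(x, y). x \<otimes>\<^bsub>G\<^esub> y) ` (prod_topology T T closure_of (S \<times> S)) \<subseteq> T closure_of S" .
    have ab: "(a, b) \<in> prod_topology T T closure_of (S \<times> S)" using a by (simp add: closure_of_Times)
    show "a \<otimes>\<^bsub>G\<^esub> b \<in> T closure_of S" using subsetD[OF sub imageI[OF ab]] by simp
  qed
qed

lemma cont_discrete1:
  assumes "\<And>s. s \<in> S \<Longrightarrow> continuous_map Z Y (\<lambda>a. f (a, s))"
  shows "continuous_map (prod_topology Z (discrete_topology S)) Y f"
proof (rule pasting_lemma[where I=S and T="\<lambda>s. topspace Z \<times> {s}" and f="\<lambda>_. f"])
  fix s assume s: "s \<in> S"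
  show "openin (prod_topology Z (discrete_topology S)) (topspace Z \<times> {s})"
    using s by (simp add: openin_prod_Times_iff)
  have c: "continuous_map (prod_topology Z (discrete_topology S)) Y (\<lambda>p. f (fst p, s))"
    using continuous_map_compose[OF continuous_map_fst assms[OF s]] by (simp add: o_def)
  show "continuous_map (subtopology (prod_topology Z (discrete_topology S)) (topspace Z \<times> {s})) Y f"
    by (rule continuous_map_eq[OF continuous_map_from_subtopology[OF c]]) auto
next
  fix x assume "x \<in> topspace (prod_topology Z (discrete_topology S))"
  then show "\<exists>j. j \<in> S \<and> x \<in> topspace Z \<times> {j} \<and> f x = f x"
    by (intro exI[of _ "snd x"]) (auto simp: mem_Times_iff)
qed simp

lemma cont_discrete2:
  assumes "\<And>s s'. s \<in> S \<Longrightarrow> s' \<in> S' \<Longrightarrow> continuous_map (prod_topology Z Z') Y (\<lambda>(a, a'). f ((a, s), (a', s')))"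
  shows "continuous_map (prod_topology (prod_topology Z (discrete_topology S)) (prod_topology Z' (discrete_topology S'))) Y f"
proof (rule pasting_lemma[where I="S \<times> S'" and T="\<lambda>(s, s'). (topspace Z \<times> {s}) \<times> (topspace Z' \<times> {s'})" and f="\<lambda>_. f"])
  fix i assume i: "i \<in> S \<times> S'"
  then obtain s s' where ss: "i = (s, s')" "s \<in> S" "s' \<in> S'" by auto
  show "openin (prod_topology (prod_topology Z (discrete_topology S)) (prod_topology Z' (discrete_topology S'))) ((\<lambda>(s, s'). (topspace Z \<times> {s}) \<times> (topspace Z' \<times> {s'})) i)"
    using ss by (simp add: openin_prod_Times_iff)
  have p1: "continuous_map (prod_topology (prod_topology Z (discrete_topology S)) (prod_topology Z' (discrete_topology S'))) Z (\<lambda>p. fst (fst p))"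
    using continuous_map_compose[OF continuous_map_fst continuous_map_fst] by (simp add: o_def)
  have p2: "continuous_map (prod_topology (prod_topology Z (discrete_topology S)) (prod_topology Z' (discrete_topology S'))) Z' (\<lambda>p. fst (snd p))"
    using continuous_map_compose[OF continuous_map_snd continuous_map_fst] by (simp add: o_def)
  have p: "continuous_map (prod_topology (prod_topology Z (discrete_topology S)) (prod_topology Z' (discrete_topology S'))) (prod_topology Z Z') (\<lambda>p. (fst (fst p), fst (snd p)))"
    using p1 p2 by (rule continuous_map_pairedI)
  have c: "continuous_map (prod_topology (prod_topology Z (discrete_topology S)) (prod_topology Z' (discrete_topology S'))) Y (\<lambda>p. f ((fst (fst p), s), (fst (snd p), s')))"
    using continuous_map_compose[OF p assms[OF ss(2,3)]] by (simp add: o_def)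
  show "continuous_map (subtopology (prod_topology (prod_topology Z (discrete_topology S)) (prod_topology Z' (discrete_topology S'))) ((\<lambda>(s, s'). (topspace Z \<times> {s}) \<times> (topspace Z' \<times> {s'})) i)) Y f"
    by (rule continuous_map_eq[OF continuous_map_from_subtopology[OF c]]) (auto simp: ss)
next
  fix x assume "x \<in> topspace (prod_topology (prod_topology Z (discrete_topology S)) (prod_topology Z' (discrete_topology S')))"
  then show "\<exists>j. j \<in> S \<times> S' \<and> x \<in> (\<lambda>(s, s'). (topspace Z \<times> {s}) \<times> (topspace Z' \<times> {s'})) j \<and> f x = f x"
    by (intro exI[of _ "(snd (fst x), snd (snd x))"]) (auto simp: mem_Times_iff)
qed simp




context transv begin

lemma induced_hom:
  assumes Bg: "group B" and hb: "\<beta> \<in> hom (G\<lparr>carrier := H\<rparr>) B"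
  shows "induced_map G H Tr \<beta> \<in> hom G (Ind B Tr)"
proof -
  interpret B: indl B Tr by (rule indl.intro[OF Bg])
  have bH: "h \<in> H \<Longrightarrow> \<beta> h \<in> carrier B" for h using hom_in_carrier[OF hb] by simp
  have bm: "h \<in> H \<Longrightarrow> h' \<in> H \<Longrightarrow> \<beta> (h \<otimes> h') = \<beta> h \<otimes>\<^bsub>B\<^esub> \<beta> h'" for h h'
    using hom_mult[OF hb] by simp
  have Trc': "x \<in> Tr \<Longrightarrow> x \<in> carrier G" for x using Trc by auto
  show ?thesis
  proof (rule homI)
    fix g assume g: "g \<in> carrier G"
    show "induced_map G H Tr \<beta> g \<in> carrier (Ind B Tr)"
      using g by (auto simp: induced_map_def B.Ind_carrier tp_permutes bH tc_H Trc')
  next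
    fix g h assume g: "g \<in> carrier G" and h: "h \<in> carrier G"
    have hi: "hinv (tr_perm G H Tr g) x = tr_act G H Tr x g" if "x \<in> Tr" for x
    proof -
      have "hinv (tr_perm G H Tr g) x = tr_perm G H Tr (inv g) x" using g by (simp add: tp_inv)
      also have "\<dots> = tr_act G H Tr x g" using that g by (simp add: tr_perm_def)
      finally show ?thesis .
    qed
    show "induced_map G H Tr \<beta> (g \<otimes> h) = induced_map G H Tr \<beta> g \<otimes>\<^bsub>Ind B Tr\<^esub> induced_map G H Tr \<beta> h"
      unfolding induced_map_def B.Ind_mult
      using g h by (auto intro!: ext simp: hi ta(1) tc_mult tp_mult Trc' bm tc_H ta_carr)
  qed
qed

lemma trans_cont: assumes "topological_group G TG" "a \<in> carrier G" "b \<in> carrier G"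
  shows "continuous_map TG TG (\<lambda>g. a \<otimes> g \<otimes> b)"
  using assms by (intro tg_mult[OF assms(1)]) (auto simp: tg_top continuous_map_id[unfolded id_def])

lemma H_open: assumes tg: "topological_group G TG" and cl: "closedin TG H" and fin: "finite Tr"
  shows "openin TG H"
proof -
  have top: "topspace TG = carrier G" using tg by (simp add: tg_top)
  have eq: "carrier G - H = (\<Union>y\<in>{y\<in>Tr. y \<notin> H}. {g \<in> topspace TG. \<one> \<otimes> g \<otimes> inv y \<in> H})"
  proof (intro equalityI subsetI)
    fix g assume g: "g \<in> carrier G - H"
    let ?y = "tr_act G H Tr \<one> g"
    have gc: "g \<in> carrier G" using g by simp
    have y: "?y \<in> Tr" "\<one> \<otimes> g \<otimes> inv ?y \<in> H" using ta[OF one_closed gc] by auto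
    have yc: "?y \<in> carrier G" using y Trc by auto
    have "?y \<notin> H"
    proof
      assume "?y \<in> H"
      then have "(g \<otimes> inv ?y) \<otimes> ?y \<in> H" using y g subgroup.m_closed[OF sub] by simp
      then show False using g yc by (simp add: m_assoc)
    qed
    then show "g \<in> (\<Union>y\<in>{y\<in>Tr. y \<notin> H}. {g \<in> topspace TG. \<one> \<otimes> g \<otimes> inv y \<in> H})"
      using y g top by auto
  next
    fix g assume "g \<in> (\<Union>y\<in>{y\<in>Tr. y \<notin> H}. {g \<in> topspace TG. \<one> \<otimes> g \<otimes> inv y \<in> H})"
    then obtain y where y: "y \<in> Tr" "y \<notin> H" "g \<in> carrier G" "g \<otimes> inv y \<in> H" using top by auto
    have yc: "y \<in> carrier G" using y Trc by auto
    show "g \<in> carrier G - H"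
    proof (clarsimp simp: y)
      assume "g \<in> H"
      then have "inv g \<otimes> (g \<otimes> inv y) \<in> H" using y subgroup.m_closed[OF sub] subgroup.m_inv_closed[OF sub] by blast
      moreover have "inv g \<otimes> (g \<otimes> inv y) = inv y" using y yc by (intro cancel1) auto
      ultimately have "inv (inv y) \<in> H" using subgroup.m_inv_closed[OF sub] by metis
      then show False using y yc by simp
    qed
  qed
  have "closedin TG (carrier G - H)"
    unfolding eq
    by (rule closedin_Union) (use fin Trc in \<open>auto intro!: closedin_continuous_map_preimage[OF trans_cont[OF tg] cl]\<close>)
  then show ?thesis using Hc top by (simp add: openin_closedin_eq)
qed

lemma trans_cont2: assumes "topological_group G TG" "a \<in> carrier G" "b \<in> carrier G"
  shows "continuous_map TG TG (\<lambda>g. a \<otimes> inv g \<otimes> b)"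
  using assms
  by (intro tg_mult[OF assms(1)] tg_inv[OF assms(1)]) (auto simp: tg_top continuous_map_id[unfolded id_def])

lemma induced_cont:
  assumes tg: "topological_group G TG" and Hop: "openin TG H" and fin: "finite Tr"
    and cb: "continuous_map (subtopology TG H) TB \<beta>"
  shows "continuous_map TG (Ind_topology TB Tr) (induced_map G H Tr \<beta>)"
proof -
  have top: "topspace TG = carrier G" using tg by (simp add: tg_top)
  have c1: "continuous_map TG (product_topology (\<lambda>_. TB) Tr) (\<lambda>g. \<lambda>x\<in>Tr. \<beta> (tr_cocycle G H Tr x g))"
    unfolding continuous_map_componentwise
  proof (intro conjI ballI)
    show "(\<lambda>g. \<lambda>x\<in>Tr. \<beta> (tr_cocycle G H Tr x g)) ` topspace TG \<subseteq> extensional Tr" by auto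
    fix x assume x: "x \<in> Tr"
    have xc: "x \<in> carrier G" using x Trc by auto
    have "continuous_map TG TB (\<lambda>g. \<beta> (tr_cocycle G H Tr x g))"
    proof (rule pasting_lemma[where I=Tr and T="\<lambda>y. {g \<in> topspace TG. x \<otimes> g \<otimes> inv y \<in> H}" and f="\<lambda>y g. \<beta> (x \<otimes> g \<otimes> inv y)"])
      fix y assume y: "y \<in> Tr"
      then have yc: "inv y \<in> carrier G" using Trc by auto
      show "openin TG {g \<in> topspace TG. x \<otimes> g \<otimes> inv y \<in> H}"
        by (rule openin_continuous_map_preimage[OF trans_cont[OF tg xc yc] Hop])
      have "continuous_map (subtopology TG {g \<in> topspace TG. x \<otimes> g \<otimes> inv y \<in> H}) (subtopology TG H) (\<lambda>g. x \<otimes> g \<otimes> inv y)"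
        by (rule continuous_map_into_subtopology[OF continuous_map_from_subtopology[OF trans_cont[OF tg xc yc]]]) auto
      then show "continuous_map (subtopology TG {g \<in> topspace TG. x \<otimes> g \<otimes> inv y \<in> H}) TB (\<lambda>g. \<beta> (x \<otimes> g \<otimes> inv y))"
        using continuous_map_compose[OF _ cb] by (simp add: o_def)
    next
      fix i j g assume "i \<in> Tr" "j \<in> Tr" "g \<in> topspace TG \<inter> {g \<in> topspace TG. x \<otimes> g \<otimes> inv i \<in> H} \<inter> {g \<in> topspace TG. x \<otimes> g \<otimes> inv j \<in> H}"
      then have "i = j" using ta_eq[of x g i] ta_eq[of x g j] xc top by auto
      then show "\<beta> (x \<otimes> g \<otimes> inv i) = \<beta> (x \<otimes> g \<otimes> inv j)" by simp
    next
      fix g assume g: "g \<in> topspace TG"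
      show "\<exists>j. j \<in> Tr \<and> g \<in> {g \<in> topspace TG. x \<otimes> g \<otimes> inv j \<in> H} \<and> \<beta> (tr_cocycle G H Tr x g) = \<beta> (x \<otimes> g \<otimes> inv j)"
        using ta[OF xc] tc_eq[OF xc] g top by (intro exI[of _ "tr_act G H Tr x g"]) auto
    qed
    then show "continuous_map TG TB (\<lambda>g. (\<lambda>x\<in>Tr. \<beta> (tr_cocycle G H Tr x g)) x)" using x by simp
  qed
  have c2: "continuous_map TG (discrete_topology {\<tau>. \<tau> permutes Tr}) (tr_perm G H Tr)"
  proof (rule pasting_lemma[where I="{\<tau>. \<tau> permutes Tr}" and T="\<lambda>\<sigma>. {g \<in> topspace TG. tr_perm G H Tr g = \<sigma>}" and f="\<lambda>\<sigma> _. \<sigma>"])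
    fix \<sigma> assume s: "\<sigma> \<in> {\<tau>. \<tau> permutes Tr}"
    then have sp: "\<sigma> permutes Tr" by simp
    have eq: "{g \<in> topspace TG. tr_perm G H Tr g = \<sigma>} = (\<Inter>x\<in>Tr. {g \<in> topspace TG. x \<otimes> inv g \<otimes> inv (\<sigma> x) \<in> H}) \<inter> topspace TG"
    proof (intro equalityI subsetI)
      fix g assume "g \<in> {g \<in> topspace TG. tr_perm G H Tr g = \<sigma>}"
      then have g: "g \<in> carrier G" "tr_perm G H Tr g = \<sigma>" using top by auto
      show "g \<in> (\<Inter>x\<in>Tr. {g \<in> topspace TG. x \<otimes> inv g \<otimes> inv (\<sigma> x) \<in> H}) \<inter> topspace TG"
        using g top ta(2)[of _ "inv g"] Trc by (auto simp: tr_perm_def)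
    next
      fix g assume "g \<in> (\<Inter>x\<in>Tr. {g \<in> topspace TG. x \<otimes> inv g \<otimes> inv (\<sigma> x) \<in> H}) \<inter> topspace TG"
      then have g: "g \<in> carrier G" "\<And>x. x \<in> Tr \<Longrightarrow> x \<otimes> inv g \<otimes> inv (\<sigma> x) \<in> H" using top by auto
      have "tr_perm G H Tr g = \<sigma>"
      proof
        fix x show "tr_perm G H Tr g x = \<sigma> x"
        proof (cases "x \<in> Tr")
          case True
          then show ?thesis using g Trc ta_eq[of x "inv g" "\<sigma> x"] permutes_in_image[OF sp]
            by (auto simp: tr_perm_def)
        next
          case False
          then show ?thesis using permutes_not_in[OF sp] by (simp add: tr_perm_def)
        qed
      qed
      then show "g \<in> {g \<in> topspace TG. tr_perm G H Tr g = \<sigma>}" using g top by auto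
    qed
    show "openin TG {g \<in> topspace TG. tr_perm G H Tr g = \<sigma>}"
      unfolding eq
    proof (rule openin_INT[OF fin])
      fix x assume x: "x \<in> Tr"
      have "x \<in> carrier G" "inv (\<sigma> x) \<in> carrier G" using x Trc permutes_in_image[OF sp] by auto
      then show "openin TG {g \<in> topspace TG. x \<otimes> inv g \<otimes> inv (\<sigma> x) \<in> H}"
        by (rule openin_continuous_map_preimage[OF trans_cont2[OF tg] Hop])
    qed
    show "continuous_map (subtopology TG {g \<in> topspace TG. tr_perm G H Tr g = \<sigma>}) (discrete_topology {\<tau>. \<tau> permutes Tr}) (\<lambda>_. \<sigma>)"
      using s by simp
  next
    fix g assume "g \<in> topspace TG"
    then show "\<exists>j. j \<in> {\<tau>. \<tau> permutes Tr} \<and> g \<in> {g \<in> topspace TG. tr_perm G H Tr g = j} \<and> tr_perm G H Tr g = j"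
      using tp_permutes top by auto
  qed auto
  show ?thesis
    unfolding induced_map_def Ind_topology_def
    by (rule continuous_map_pairedI[OF c1 c2])
qed

end



context indl begin

lemma proj_fst: "x \<in> Tr \<Longrightarrow> continuous_map (prod_topology (product_topology (\<lambda>_. TB) Tr) Y) TB (\<lambda>p. fst p x)"
  using continuous_map_compose[OF continuous_map_fst continuous_map_product_projection[of x Tr "\<lambda>_. TB"]]
  by (simp add: o_def)
lemma proj_snd: "x \<in> Tr \<Longrightarrow> continuous_map (prod_topology Y (product_topology (\<lambda>_. TB) Tr)) TB (\<lambda>p. snd p x)"
  using continuous_map_compose[OF continuous_map_snd continuous_map_product_projection[of x Tr "\<lambda>_. TB"]]
  by (simp add: o_def)
lemma proj: "x \<in> Tr \<Longrightarrow> continuous_map (product_topology (\<lambda>_. TB) Tr) TB (\<lambda>k. k x)"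
  using continuous_map_product_projection[of x Tr "\<lambda>_. TB"] by simp

lemma Ind_tg: assumes tgB: "topological_group B TB"
  shows "topological_group (Ind B Tr) (Ind_topology TB Tr)"
proof -
  have top: "topspace (Ind_topology TB Tr) = carrier (Ind B Tr)"
    by (simp add: Ind_topology_def Ind_carrier tg_top[OF tgB])
  have m: "continuous_map (prod_topology (Ind_topology TB Tr) (Ind_topology TB Tr)) (Ind_topology TB Tr) (\<lambda>(x, y). x \<otimes>\<^bsub>Ind B Tr\<^esub> y)"
    unfolding Ind_topology_def
  proof (rule cont_discrete2)
    fix \<tau> \<tau>' assume t: "\<tau> \<in> {\<tau>. \<tau> permutes Tr}" "\<tau>' \<in> {\<tau>. \<tau> permutes Tr}"
    have "continuous_map (prod_topology (product_topology (\<lambda>_. TB) Tr) (product_topology (\<lambda>_. TB) Tr))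
       (prod_topology (product_topology (\<lambda>_. TB) Tr) (discrete_topology {\<tau>. \<tau> permutes Tr}))
       (\<lambda>p. ((\<lambda>x\<in>Tr. fst p x \<otimes> snd p (hinv \<tau> x)), \<tau> \<circ> \<tau>'))"
    proof (rule continuous_map_pairedI)
      show "continuous_map (prod_topology (product_topology (\<lambda>_. TB) Tr) (product_topology (\<lambda>_. TB) Tr))
        (product_topology (\<lambda>_. TB) Tr) (\<lambda>p. \<lambda>x\<in>Tr. fst p x \<otimes> snd p (hinv \<tau> x))"
        unfolding continuous_map_componentwise
        using t by (auto intro!: tg_mult[OF tgB] proj_fst proj_snd simp: hinv_in)
      show "continuous_map (prod_topology (product_topology (\<lambda>_. TB) Tr) (product_topology (\<lambda>_. TB) Tr))
        (discrete_topology {\<tau>. \<tau> permutes Tr}) (\<lambda>p. \<tau> \<circ> \<tau>')"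
        using t by (simp add: permutes_compose)
    qed
    then show "continuous_map (prod_topology (product_topology (\<lambda>_. TB) Tr) (product_topology (\<lambda>_. TB) Tr))
       (prod_topology (product_topology (\<lambda>_. TB) Tr) (discrete_topology {\<tau>. \<tau> permutes Tr}))
       (\<lambda>(a, a'). (\<lambda>(x, y). x \<otimes>\<^bsub>Ind B Tr\<^esub> y) ((a, \<tau>), a', \<tau>'))"
      by (rule continuous_map_eq) (auto simp: Ind_mult)
  qed
  have i: "continuous_map (Ind_topology TB Tr) (Ind_topology TB Tr) (\<lambda>x. inv\<^bsub>Ind B Tr\<^esub> x)"
  proof (rule continuous_map_eq)
    show "continuous_map (Ind_topology TB Tr) (Ind_topology TB Tr) (\<lambda>p. ((\<lambda>x\<in>Tr. inv (fst p (snd p x))), hinv (snd p)))"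
      unfolding Ind_topology_def
    proof (rule cont_discrete1)
      fix \<tau> assume t: "\<tau> \<in> {\<tau>. \<tau> permutes Tr}"
      have "continuous_map (product_topology (\<lambda>_. TB) Tr) (prod_topology (product_topology (\<lambda>_. TB) Tr) (discrete_topology {\<tau>. \<tau> permutes Tr}))
         (\<lambda>k. ((\<lambda>x\<in>Tr. inv (k (\<tau> x))), hinv \<tau>))"
      proof (rule continuous_map_pairedI)
        show "continuous_map (product_topology (\<lambda>_. TB) Tr) (product_topology (\<lambda>_. TB) Tr) (\<lambda>k. \<lambda>x\<in>Tr. inv (k (\<tau> x)))"
          unfolding continuous_map_componentwise
          using t by (auto intro!: tg_inv[OF tgB] proj simp: permutes_in_image)
        show "continuous_map (product_topology (\<lambda>_. TB) Tr) (discrete_topology {\<tau>. \<tau> permutes Tr}) (\<lambda>k. hinv \<tau>)"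
          using t by (simp add: permutes_inv)
      qed
      then show "continuous_map (product_topology (\<lambda>_. TB) Tr) (prod_topology (product_topology (\<lambda>_. TB) Tr) (discrete_topology {\<tau>. \<tau> permutes Tr}))
         (\<lambda>a. ((\<lambda>x\<in>Tr. inv (fst (a, \<tau>) (snd (a, \<tau>) x))), hinv (snd (a, \<tau>))))" by simp
    qed
  next
    fix p assume "p \<in> topspace (Ind_topology TB Tr)"
    then obtain k \<tau> where "p = (k, \<tau>)" "\<tau> permutes Tr" "k \<in> PiE Tr (\<lambda>_. carrier B)"
      using top by (auto simp: Ind_carrier)
    then show "((\<lambda>x\<in>Tr. inv (fst p (snd p x))), hinv (snd p)) = inv\<^bsub>Ind B Tr\<^esub> p"
      by (simp add: Ind_inv)
  qed
  show ?thesis unfolding topological_group_def using Ind_group top m i by blast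
qed

lemma Ind_compact: assumes "compact_group B TB" "finite Tr"
  shows "compact_space (Ind_topology TB Tr)" "Hausdorff_space (Ind_topology TB Tr)"
  using assms
  by (auto simp: Ind_topology_def compact_group_def compact_space_prod_topology compact_space_product_topology
      compact_space_discrete_topology finite_permutations Hausdorff_space_prod_topology Hausdorff_space_product_topology)

end



theorem proposition2p5:
  fixes G :: "'a monoid" and TG :: "'a topology" and H Tr :: "'a set"
    and B :: "'b monoid" and TB :: "'b topology" and \<beta> :: "'a \<Rightarrow> 'b"
  assumes "topological_group G TG"
    and "subgroup H G" and "closedin TG H" and "finite (rcosets\<^bsub>G\<^esub> H)"
    and "bohr_compactification TYPE('l) (G\<lparr>carrier := H\<rparr>) (subtopology TG H) B TB \<beta>"
    and "Tr \<subseteq> carrier G" and "\<forall>g\<in>carrier G. \<exists>!x. x \<in> Tr \<and> g \<in> H #>\<^bsub>G\<^esub> x"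
  shows "induced_map G H Tr \<beta> \<in> hom G (Ind B Tr)
    \<and> continuous_map TG (Ind_topology TB Tr) (induced_map G H Tr \<beta>)
    \<and> (let C = (Ind_topology TB Tr) closure_of (induced_map G H Tr \<beta> ` carrier G)
       in bohr_compactification TYPE('l) G TG ((Ind B Tr)\<lparr>carrier := C\<rparr>)
            (subtopology (Ind_topology TB Tr) C) (induced_map G H Tr \<beta>))"
proof -
  have grp: "group G" using assms(1) by (rule tg_group)
  have topG: "topspace TG = carrier G" using assms(1) by (rule tg_top)
  interpret T: transv G H Tr
    by (rule transv.intro[OF grp]) (rule transv_axioms.intro[OF assms(2,6,7)])
  have cgB: "compact_group B TB" and hb: "\<beta> \<in> hom (G\<lparr>carrier := H\<rparr>) B"
    and cb: "continuous_map (subtopology TG H) TB \<beta>"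
    and univH: "\<And>(L::'l monoid) TL \<phi>. compact_group L TL \<Longrightarrow> \<phi> \<in> hom (G\<lparr>carrier := H\<rparr>) L \<Longrightarrow>
        continuous_map (subtopology TG H) TL \<phi> \<Longrightarrow>
        (\<exists>\<alpha>. continuous_map TB TL \<alpha> \<and> (\<forall>g\<in>H. \<phi> g = \<alpha> (\<beta> g)))"
    using assms(5) unfolding bohr_compactification_def by auto
  have tgB: "topological_group B TB" using cgB by (simp add: compact_group_def)
  have Bg: "group B" using tgB by (rule tg_group)
  interpret I: indl B Tr by (rule indl.intro[OF Bg])
  have finTr: "finite Tr"
  proof -
    have "inj_on (\<lambda>x. H #>\<^bsub>G\<^esub> x) Tr"
    proof (rule inj_onI)
      fix x y assume xy: "x \<in> Tr" "y \<in> Tr" "H #>\<^bsub>G\<^esub> x = H #>\<^bsub>G\<^esub> y"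
      then have xc: "x \<in> carrier G" using assms(6) by auto
      have "x \<in> H #>\<^bsub>G\<^esub> x" by (rule group.rcos_self[OF grp xc assms(2)])
      then show "x = y" using xy assms(7) xc by (metis)
    qed
    moreover have "(\<lambda>x. H #>\<^bsub>G\<^esub> x) ` Tr \<subseteq> rcosets\<^bsub>G\<^esub> H"
      using assms(6) by (auto simp: RCOSETS_def)
    ultimately show ?thesis using assms(4) finite_imageD finite_subset by metis
  qed
  obtain x0 where x0: "x0 \<in> Tr" using assms(7) grp by (metis group.is_monoid monoid.one_closed)
  have x0c: "x0 \<in> carrier G" using x0 assms(6) by auto
  let ?f = "induced_map G H Tr \<beta>"
  let ?IT = "Ind_topology TB Tr"
  have hom: "?f \<in> hom G (Ind B Tr)" by (rule T.induced_hom[OF Bg hb])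
  have Hop: "openin TG H" by (rule T.H_open[OF assms(1) assms(3) finTr])
  have cont: "continuous_map TG ?IT ?f" by (rule T.induced_cont[OF assms(1) Hop finTr cb])
  have tgI: "topological_group (Ind B Tr) ?IT" by (rule I.Ind_tg[OF tgB])
  have topI: "topspace ?IT = carrier (Ind B Tr)" using tgI by (rule tg_top)
  have gh: "group_hom G (Ind B Tr) ?f"
    unfolding group_hom_def group_hom_axioms_def using grp I.Ind_group hom by blast
  define C where "C = ?IT closure_of (?f ` carrier G)"
  have subC: "subgroup C (Ind B Tr)"
    unfolding C_def by (rule tg_closure_sub[OF tgI group_hom.img_is_subgroup[OF gh]])
  have imgI: "?f ` carrier G \<subseteq> topspace ?IT" using hom topI by (auto simp: hom_def)
  have imgC: "?f ` carrier G \<subseteq> C" unfolding C_def by (rule closure_of_subset[OF imgI])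
  have cg: "compact_group ((Ind B Tr)\<lparr>carrier := C\<rparr>) (subtopology ?IT C)"
    unfolding compact_group_def
  proof (intro conjI)
    show "topological_group ((Ind B Tr)\<lparr>carrier := C\<rparr>) (subtopology ?IT C)" by (rule tg_sub[OF tgI subC])
    show "compact_space (subtopology ?IT C)"
      by (rule compact_space_subtopology[OF closedin_compact_space[OF I.Ind_compact(1)[OF cgB finTr]]])
         (simp add: C_def)
    show "Hausdorff_space (subtopology ?IT C)"
      by (rule Hausdorff_space_subtopology[OF I.Ind_compact(2)[OF cgB finTr]])
  qed
  have homC: "?f \<in> hom G ((Ind B Tr)\<lparr>carrier := C\<rparr>)"
    using hom imgC by (auto simp: hom_def)
  have contC: "continuous_map TG (subtopology ?IT C) ?f"
    by (rule continuous_map_into_subtopology[OF cont]) (use imgC topG in auto)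
  have clos: "subtopology ?IT C closure_of (?f ` carrier G) = C"
  proof -
    have e: "C \<inter> ?f ` carrier G = ?f ` carrier G" using imgC by blast
    have "subtopology ?IT C closure_of (?f ` carrier G) = C \<inter> (?IT closure_of (?f ` carrier G))"
      by (simp add: closure_of_subtopology e)
    also have "\<dots> = C" by (simp add: C_def)
    finally show ?thesis .
  qed
  have univ: "\<forall>(L::'l monoid) TL \<phi>. compact_group L TL \<and> \<phi> \<in> hom G L \<and> continuous_map TG TL \<phi> \<longrightarrow>
        (\<exists>\<alpha>. continuous_map (subtopology ?IT C) TL \<alpha> \<and> (\<forall>g\<in>carrier G. \<phi> g = \<alpha> (?f g)))"
  proof (intro allI impI, elim conjE)
    fix L :: "'l monoid" and TL \<phi>
    assume cgL: "compact_group L TL" and hphi: "\<phi> \<in> hom G L" and cphi: "continuous_map TG TL \<phi>"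
    have tgL: "topological_group L TL" using cgL by (simp add: compact_group_def)
    have Lg: "group L" using tgL by (rule tg_group)
    have topL: "topspace TL = carrier L" using tgL by (rule tg_top)
    have hphiH: "\<phi> \<in> hom (G\<lparr>carrier := H\<rparr>) L" using hphi T.Hc by (auto simp: hom_def)
    have cphiH: "continuous_map (subtopology TG H) TL \<phi>" by (rule continuous_map_from_subtopology[OF cphi])
    obtain \<alpha>H where caH: "continuous_map TB TL \<alpha>H" and eqH: "\<forall>h\<in>H. \<phi> h = \<alpha>H (\<beta> h)"
      using univH[OF cgL hphiH cphiH] by blast
    have phc: "g \<in> carrier G \<Longrightarrow> \<phi> g \<in> carrier L" for g using hphi by (rule hom_in_carrier)
    define \<alpha> where "\<alpha> = (\<lambda>p. inv\<^bsub>L\<^esub> (\<phi> x0) \<otimes>\<^bsub>L\<^esub> \<alpha>H (fst p x0) \<otimes>\<^bsub>L\<^esub> \<phi> (hinv (snd p) x0))"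
    have ca: "continuous_map ?IT TL \<alpha>"
      unfolding Ind_topology_def
    proof (rule cont_discrete1)
      fix \<tau> assume t: "\<tau> \<in> {\<tau>. \<tau> permutes Tr}"
      have "hinv \<tau> x0 \<in> Tr" using t x0 I.hinv_in by auto
      then have c2: "\<phi> (hinv \<tau> x0) \<in> carrier L" using assms(6) phc by auto
      have c1: "inv\<^bsub>L\<^esub> (\<phi> x0) \<in> carrier L" using phc[OF x0c] Lg by simp
      have "continuous_map (product_topology (\<lambda>_. TB) Tr) TL (\<lambda>a. inv\<^bsub>L\<^esub> (\<phi> x0) \<otimes>\<^bsub>L\<^esub> \<alpha>H (a x0) \<otimes>\<^bsub>L\<^esub> \<phi> (hinv \<tau> x0))"
        using c1 c2 topL continuous_map_compose[OF I.proj[OF x0] caH]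
        by (intro tg_mult[OF tgL]) (auto simp: o_def)
      then show "continuous_map (product_topology (\<lambda>_. TB) Tr) TL (\<lambda>a. \<alpha> (a, \<tau>))"
        by (simp add: \<alpha>_def)
    qed
    have eq: "\<phi> g = \<alpha> (?f g)" if g: "g \<in> carrier G" for g
    proof -
      let ?y = "tr_act G H Tr x0 g" let ?c = "tr_cocycle G H Tr x0 g"
      have yc: "?y \<in> carrier G" using T.ta_carr[OF x0c g] .
      have cH: "?c \<in> H" using T.tc_H[OF x0c g] .
      have cc: "?c \<in> carrier G" using cH T.Hc by auto
      have f1: "fst (?f g) x0 = \<beta> ?c" using x0 by (simp add: induced_map_def)
      have f2: "hinv (snd (?f g)) x0 = ?y"
      proof -
        have "hinv (snd (?f g)) x0 = tr_perm G H Tr (inv\<^bsub>G\<^esub> g) x0"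
          using g by (simp add: induced_map_def T.tp_inv)
        also have "\<dots> = ?y" using x0 g by (simp add: tr_perm_def)
        finally show ?thesis .
      qed
      have cy: "?c \<otimes>\<^bsub>G\<^esub> ?y = x0 \<otimes>\<^bsub>G\<^esub> g"
        using x0c g yc grp by (simp add: T.tc_eq group.inv_solve_right' T.m_assoc)
      have "\<phi> ?c \<otimes>\<^bsub>L\<^esub> \<phi> ?y = \<phi> x0 \<otimes>\<^bsub>L\<^esub> \<phi> g"
        using cy hom_mult[OF hphi cc yc] hom_mult[OF hphi x0c g] by simp
      then have "\<alpha> (?f g) = inv\<^bsub>L\<^esub> (\<phi> x0) \<otimes>\<^bsub>L\<^esub> (\<phi> x0 \<otimes>\<^bsub>L\<^esub> \<phi> g)"
        unfolding \<alpha>_def using f1 f2 eqH cH phc[OF cc] phc[OF yc] phc[OF x0c] Lg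
        by (simp add: group.is_monoid monoid.m_assoc group.inv_closed)
      also have "\<dots> = \<phi> g" using phc[OF x0c] phc[OF g] Lg
        by (simp add: monoid.m_assoc[symmetric] group.is_monoid group.l_inv group.inv_closed)
      finally show ?thesis by simp
    qed
    show "\<exists>\<alpha>. continuous_map (subtopology ?IT C) TL \<alpha> \<and> (\<forall>g\<in>carrier G. \<phi> g = \<alpha> (?f g))"
      using continuous_map_from_subtopology[OF ca] eq by blast
  qed
  have "bohr_compactification TYPE('l) G TG ((Ind B Tr)\<lparr>carrier := C\<rparr>) (subtopology ?IT C) ?f"
    unfolding bohr_compactification_def using assms(1) cg homC contC clos univ by simp
  then show ?thesis using hom cont by (simp add: C_def Let_def)
qed


end
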